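(* Let $x_1<x_2$, $u_0\in C^4([x_1,x_2])$ and $u_1\in C^3([x_1,x_2])$. Consider the Tricomi equation $y\,u_{xx}+u_{yy}=0$ with the data $u(x,0)=u_0(x)$, $u_y(x,0)=u_1(x)$ for $x\in[x_1,x_2]$. Then there exists a constant $\bar\delta$ with $0<\bar\delta\le\sqrt[3]{\frac{9(x_2-x_1)^2}{16}}$ such that this boundary problem has a classical solution in the region \[ \overline D_{\bar\delta}=\Big\{(x,y):\ -\bar\delta\le y\le 0,\ x_1+\tfrac23(-y)^{3/2}\le x\le x_2-\tfrac23(-y)^{3/2}\Big\}. \] *)

theory Defs
  imports "HOL-Analysis.Analysis"
begin

fun Ck_on :: "nat \<Rightarrow> (real \<Rightarrow> real) \<Rightarrow> real set \<Rightarrow> bool" where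
  "Ck_on 0 f S = continuous_on S f"
| "Ck_on (Suc k) f S =
     (\<exists>f'. (\<forall>x\<in>S. (f has_real_derivative f' x) (at x within S)) \<and> Ck_on k f' S)"

definition tricomi_region :: "real \<Rightarrow> real \<Rightarrow> real \<Rightarrow> (real \<times> real) set" where
  "tricomi_region x1 x2 \<delta> =
     {(x, y). - \<delta> \<le> y \<and> y \<le> 0 \<and>
              x1 + 2/3 * (- y) powr (3/2) \<le> x \<and> x \<le> x2 - 2/3 * (- y) powr (3/2)}"

definition tricomi_classical_solution ::
  "real \<Rightarrow> real \<Rightarrow> (real \<Rightarrow> real) \<Rightarrow> (real \<Rightarrow> real) \<Rightarrow> (real \<times> real) set
     \<Rightarrow> (real \<times> real \<Rightarrow> real) \<Rightarrow> bool" where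
  "tricomi_classical_solution x1 x2 u0 u1 D u =
    (\<exists>ux uy uxx uxy uyx uyy.
       continuous_on D u \<and> continuous_on D ux \<and> continuous_on D uy \<and>
       continuous_on D uxx \<and> continuous_on D uxy \<and> continuous_on D uyx \<and> continuous_on D uyy \<and>
       (\<forall>p\<in>D. (u has_derivative (\<lambda>(h, k). ux p * h + uy p * k)) (at p within D)) \<and>
       (\<forall>p\<in>D. (ux has_derivative (\<lambda>(h, k). uxx p * h + uxy p * k)) (at p within D)) \<and>
       (\<forall>p\<in>D. (uy has_derivative (\<lambda>(h, k). uyx p * h + uyy p * k)) (at p within D)) \<and>
       (\<forall>p\<in>D. snd p * uxx p + uyy p = 0) \<and>
       (\<forall>x\<in>{x1..x2}. u (x, 0) = u0 x \<and> uy (x, 0) = u1 x))"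

end

theory Submission
  imports Defs
begin

lemma Ck_on_cont: "Ck_on k f S \<Longrightarrow> continuous_on S f"
proof (induction k arbitrary: f)
  case 0 then show ?case by simp
next
  case (Suc k)
  then obtain f' where "\<forall>x\<in>S. (f has_real_derivative f' x) (at x within S)" by auto
  then show ?case
    by (meson DERIV_continuous continuous_on_eq_continuous_within)
qed

lemma global_antideriv:
  fixes g :: "real \<Rightarrow> real"
  assumes g: "continuous_on UNIV g"
  shows "\<exists>G. G a = v \<and> (\<forall>x. (G has_real_derivative g x) (at x))"
proof -
  define G where "G x = v + integral {a..x} g - integral {x..a} g" for x
  have "(G has_real_derivative g x) (at x)" for x
  proof -
    define m where "m = min a x - 1"
    define M where "M = max a x + 1"
    define H where "H z = v + integral {m..z} g - integral {m..a} g" for z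
    have cm: "continuous_on {m..M} g" using g continuous_on_subset by blast
    have i: "((\<lambda>z. integral {m..z} g) has_real_derivative g x) (at x within {m..M})"
      by (rule integral_has_real_derivative[OF cm]) (auto simp: m_def M_def)
    have "(H has_real_derivative g x) (at x within {m..M})"
      unfolding H_def using i by (auto intro!: derivative_eq_intros)
    then have "(H has_real_derivative g x) (at x within {m<..<M})"
      by (rule has_field_derivative_subset) auto
    then have hx: "(H has_real_derivative g x) (at x)"
      by (subst (asm) at_within_open) (auto simp: m_def M_def)
    show ?thesis
    proof (rule has_field_derivative_transform_within_open[OF hx, of "{m<..<M}"])
      fix z assume z: "z \<in> {m<..<M}"
      have int: "g integrable_on {m..M}" using cm integrable_continuous_real by blast
      show "H z = G z"
      proof (cases "a \<le> z")
        case True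
        have "integral {m..a} g + integral {a..z} g = integral {m..z} g"
          by (rule Henstock_Kurzweil_Integration.integral_combine)
             (use True z in \<open>auto simp: m_def M_def intro: integrable_on_subinterval[OF int]\<close>)
        moreover have "integral {z..a} g = 0" using True
          by (cases "z = a") auto
        ultimately show ?thesis unfolding H_def G_def by linarith
      next
        case False
        have "integral {m..z} g + integral {z..a} g = integral {m..a} g"
          by (rule Henstock_Kurzweil_Integration.integral_combine)
             (use False z in \<open>auto simp: m_def M_def intro!: integrable_on_subinterval[OF int]\<close>)
        moreover have "integral {a..z} g = 0" using False by auto
        ultimately show ?thesis unfolding H_def G_def by linarith
      qed
    qed (auto simp: m_def M_def)
  qed
  moreover have "G a = v" by (simp add: G_def)
  ultimately show ?thesis by blast
qed

lemma Ck_extend: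
  assumes ab: "a < b" and "Ck_on k f {a..b}"
  shows "\<exists>F. Ck_on k F UNIV \<and> (\<forall>x\<in>{a..b}. F x = f x)"
  using assms(2)
proof (induction k arbitrary: f)
  case 0
  define F where "F x = f (max a (min b x))" for x
  have "continuous_on UNIV F" unfolding F_def
    by (rule continuous_on_compose2[OF 0[simplified]]) (use ab in \<open>auto intro!: continuous_intros\<close>)
  moreover have "\<forall>x\<in>{a..b}. F x = f x" by (auto simp: F_def)
  ultimately show ?case by auto
next
  case (Suc k)
  then obtain f' where d: "\<forall>x\<in>{a..b}. (f has_real_derivative f' x) (at x within {a..b})"
    and c: "Ck_on k f' {a..b}" by auto
  obtain F' where F': "Ck_on k F' UNIV" "\<forall>x\<in>{a..b}. F' x = f' x" using Suc.IH[OF c] by blast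
  obtain G where G: "G a = f a" "\<forall>x. (G has_real_derivative F' x) (at x)"
    using global_antideriv[OF Ck_on_cont[OF F'(1)]] by blast
  have "\<forall>x\<in>{a..b}. G x = f x"
  proof -
    have "\<exists>c. \<forall>x\<in>{a..b}. (\<lambda>x. G x - f x) x = c"
    proof (rule has_field_derivative_zero_constant)
      fix x assume x: "x \<in> {a..b}"
      have "((\<lambda>x. G x - f x) has_real_derivative F' x - f' x) (at x within {a..b})"
        using G(2) d x by (intro derivative_eq_intros) (auto intro: has_field_derivative_at_within)
      then show "((\<lambda>x. G x - f x) has_real_derivative 0) (at x within {a..b})"
        using F'(2) x by simp
    qed simp
    then obtain c where "\<forall>x\<in>{a..b}. G x - f x = c" by auto
    moreover have "G a - f a = 0" using G(1) by simp
    ultimately show ?thesis using ab by (metis atLeastAtMost_iff eq_iff_diff_eq_0 order_less_imp_le order_refl)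
  qed
  moreover have "Ck_on (Suc k) G UNIV" using G(2) F'(1) by auto
  ultimately show ?case by blast
qed



definition J :: "(real \<Rightarrow> real) \<Rightarrow> (real \<Rightarrow> real) \<Rightarrow> real \<Rightarrow> real \<Rightarrow> real" where
  "J h w x t = integral {-(pi/2)..pi/2} (\<lambda>\<theta>. h (x + t * sin \<theta>) * w \<theta>)"

lemma cont2_compose:
  fixes f :: "real \<Rightarrow> real \<Rightarrow> real"
  assumes "continuous_on UNIV (\<lambda>p. f (fst p) (snd p))" "continuous_on S a" "continuous_on S b"
  shows "continuous_on S (\<lambda>z. f (a z) (b z))"
proof -
  have "continuous_on S (\<lambda>z. (a z, b z))" using assms(2,3) by (intro continuous_intros)
  from continuous_on_compose2[OF assms(1) this] show ?thesis by simp
qed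

lemma J_cont:
  assumes h: "continuous_on UNIV h" and w: "continuous_on {-(pi/2)..pi/2} w"
  shows "continuous_on UNIV (\<lambda>p. J h w (fst p) (snd p))"
proof -
  have "continuous_on (UNIV \<times> cbox (-(pi/2)) (pi/2)) (\<lambda>(p, \<theta>). h (fst p + snd p * sin \<theta>) * w \<theta>)"
  proof -
    have c1: "continuous_on (UNIV \<times> cbox (-(pi/2)) (pi/2)) (\<lambda>z. h (fst (fst z) + snd (fst z) * sin (snd z)))"
      by (rule continuous_on_compose2[OF h]) (auto intro!: continuous_intros)
    have c2: "continuous_on (UNIV \<times> cbox (-(pi/2)) (pi/2)) (\<lambda>z. w (snd z))"
      by (rule continuous_on_compose2[OF w]) (auto intro!: continuous_intros)
    show ?thesis using continuous_on_mult[OF c1 c2] by (simp add: split_beta')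
  qed
  from integral_continuous_on_param[OF this] show ?thesis
    by (simp add: J_def)
qed

lemma J_dx:
  assumes d: "\<And>x. (h has_real_derivative h' x) (at x)" and h': "continuous_on UNIV h'"
    and w: "continuous_on {-(pi/2)..pi/2} w"
  shows "((\<lambda>x. J h w x t) has_real_derivative J h' w x t) (at x)"
proof -
  have "((\<lambda>x. integral (cbox (-(pi/2)) (pi/2)) (\<lambda>\<theta>. h (x + t * sin \<theta>) * w \<theta>)) has_field_derivative
        integral (cbox (-(pi/2)) (pi/2)) (\<lambda>\<theta>. h' (x + t * sin \<theta>) * w \<theta>)) (at x within UNIV)"
  proof (rule leibniz_rule_field_derivative[where fx="\<lambda>x \<theta>. h' (x + t * sin \<theta>) * w \<theta>"])
    fix x :: real and \<theta> :: real
    show "((\<lambda>x. h (x + t * sin \<theta>) * w \<theta>) has_field_derivative h' (x + t * sin \<theta>) * w \<theta>) (at x within UNIV)"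
      by (auto intro!: derivative_eq_intros DERIV_chain2[OF d])
  next
    fix x :: real
    have hc: "continuous_on UNIV h" using d by (meson DERIV_isCont continuous_at_imp_continuous_on)
    have "continuous_on (cbox (-(pi/2)) (pi/2)) (\<lambda>\<theta>. h (x + t * sin \<theta>))"
      by (rule continuous_on_compose2[OF hc]) (auto intro!: continuous_intros)
    then have "continuous_on (cbox (-(pi/2)) (pi/2)) (\<lambda>\<theta>. h (x + t * sin \<theta>) * w \<theta>)"
      using w by (auto intro!: continuous_intros)
    then show "(\<lambda>\<theta>. h (x + t * sin \<theta>) * w \<theta>) integrable_on cbox (-(pi/2)) (pi/2)"
      by (rule integrable_continuous)
  next
    have c1: "continuous_on (UNIV \<times> cbox (-(pi/2)) (pi/2)) (\<lambda>z. h' (fst z + t * sin (snd z)))"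
      by (rule continuous_on_compose2[OF h']) (auto intro!: continuous_intros)
    have c2: "continuous_on (UNIV \<times> cbox (-(pi/2)) (pi/2)) (\<lambda>z. w (snd z))"
      by (rule continuous_on_compose2[OF w]) (auto intro!: continuous_intros)
    show "continuous_on (UNIV \<times> cbox (-(pi/2)) (pi/2)) (\<lambda>(x, \<theta>). h' (x + t * sin \<theta>) * w \<theta>)"
      using continuous_on_mult[OF c1 c2] by (simp add: split_beta')
  qed auto
  then show ?thesis by (simp add: J_def)
qed

lemma J_dt:
  assumes d: "\<And>x. (h has_real_derivative h' x) (at x)" and h': "continuous_on UNIV h'"
    and w: "continuous_on {-(pi/2)..pi/2} w"
  shows "((\<lambda>t. J h w x t) has_real_derivative J h' (\<lambda>\<theta>. sin \<theta> * w \<theta>) x t) (at t)"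
proof -
  have "((\<lambda>t. integral (cbox (-(pi/2)) (pi/2)) (\<lambda>\<theta>. h (x + t * sin \<theta>) * w \<theta>)) has_field_derivative
        integral (cbox (-(pi/2)) (pi/2)) (\<lambda>\<theta>. h' (x + t * sin \<theta>) * (sin \<theta> * w \<theta>))) (at t within UNIV)"
  proof (rule leibniz_rule_field_derivative[where fx="\<lambda>t \<theta>. h' (x + t * sin \<theta>) * (sin \<theta> * w \<theta>)"])
    fix t :: real and \<theta> :: real
    show "((\<lambda>t. h (x + t * sin \<theta>) * w \<theta>) has_field_derivative h' (x + t * sin \<theta>) * (sin \<theta> * w \<theta>)) (at t within UNIV)"
      by (auto intro!: derivative_eq_intros DERIV_chain2[OF d])
  next
    fix t :: real
    have hc: "continuous_on UNIV h" using d by (meson DERIV_isCont continuous_at_imp_continuous_on)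
    have "continuous_on (cbox (-(pi/2)) (pi/2)) (\<lambda>\<theta>. h (x + t * sin \<theta>))"
      by (rule continuous_on_compose2[OF hc]) (auto intro!: continuous_intros)
    then have "continuous_on (cbox (-(pi/2)) (pi/2)) (\<lambda>\<theta>. h (x + t * sin \<theta>) * w \<theta>)"
      using w by (auto intro!: continuous_intros)
    then show "(\<lambda>\<theta>. h (x + t * sin \<theta>) * w \<theta>) integrable_on cbox (-(pi/2)) (pi/2)"
      by (rule integrable_continuous)
  next
    have c1: "continuous_on (UNIV \<times> cbox (-(pi/2)) (pi/2)) (\<lambda>z. h' (x + fst z * sin (snd z)))"
      by (rule continuous_on_compose2[OF h']) (auto intro!: continuous_intros)
    have c2: "continuous_on (UNIV \<times> cbox (-(pi/2)) (pi/2)) (\<lambda>z. w (snd z))"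
      by (rule continuous_on_compose2[OF w]) (auto intro!: continuous_intros)
    have c3: "continuous_on (UNIV \<times> cbox (-(pi/2)) (pi/2)) (\<lambda>z::real\<times>real. sin (snd z) * w (snd z))"
      by (intro continuous_on_mult c2 continuous_on_sin continuous_on_snd continuous_on_id)
    show "continuous_on (UNIV \<times> cbox (-(pi/2)) (pi/2)) (\<lambda>(t, \<theta>). h' (x + t * sin \<theta>) * (sin \<theta> * w \<theta>))"
      using continuous_on_mult[OF c1 c3] by (simp add: split_beta')
  qed auto
  then show ?thesis by (simp add: J_def)
qed

definition L :: "(real \<Rightarrow> real \<Rightarrow> real) \<Rightarrow> real \<Rightarrow> real \<Rightarrow> real" where
  "L h x t = integral {0..1} (\<lambda>r. t^2 * r * h x (t * r))"

lemma L_cont: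
  assumes h: "continuous_on UNIV (\<lambda>p. h (fst p) (snd p))"
  shows "continuous_on UNIV (\<lambda>p. L h (fst p) (snd p))"
proof -
  have c: "continuous_on (UNIV \<times> cbox 0 1) (\<lambda>z::(real\<times>real)\<times>real. h (fst (fst z)) (snd (fst z) * snd z))"
    by (rule cont2_compose[OF h]) (auto intro!: continuous_intros)
  have "continuous_on (UNIV \<times> cbox 0 1) (\<lambda>(p::real\<times>real, r::real). (snd p)^2 * r * h (fst p) (snd p * r))"
    using c by (auto simp: split_beta' intro!: continuous_intros)
  from integral_continuous_on_param[OF this] show ?thesis by (simp add: L_def)
qed

lemma L_dx:
  assumes d: "\<And>x t. ((\<lambda>x. h x t) has_real_derivative hx x t) (at x)"
    and hc: "continuous_on UNIV (\<lambda>p. h (fst p) (snd p))"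
    and hxc: "continuous_on UNIV (\<lambda>p. hx (fst p) (snd p))"
  shows "((\<lambda>x. L h x t) has_real_derivative L hx x t) (at x)"
proof -
  have "((\<lambda>x. integral (cbox 0 1) (\<lambda>r. t^2 * r * h x (t * r))) has_field_derivative
        integral (cbox 0 1) (\<lambda>r. t^2 * r * hx x (t * r))) (at x within UNIV)"
  proof (rule leibniz_rule_field_derivative[where fx="\<lambda>x r. t^2 * r * hx x (t * r)"])
    fix x r :: real
    show "((\<lambda>x. t^2 * r * h x (t * r)) has_field_derivative t^2 * r * hx x (t * r)) (at x within UNIV)"
      using d[where t="t*r"] by (auto intro!: derivative_eq_intros)
  next
    fix x :: real
    have "continuous_on (cbox 0 1) (\<lambda>r. h x (t * r))"
      by (rule cont2_compose[OF hc]) (auto intro!: continuous_intros)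
    then have "continuous_on (cbox 0 1) (\<lambda>r. t^2 * r * h x (t * r))"
      by (auto intro!: continuous_intros)
    then show "(\<lambda>r. t^2 * r * h x (t * r)) integrable_on cbox 0 1"
      by (rule integrable_continuous)
  next
    have c: "continuous_on (UNIV \<times> cbox 0 1) (\<lambda>z::real\<times>real. hx (fst z) (t * snd z))"
      by (rule cont2_compose[OF hxc]) (auto intro!: continuous_intros)
    show "continuous_on (UNIV \<times> cbox 0 1) (\<lambda>(x, r). t^2 * r * hx x (t * r))"
      using c by (auto simp: split_beta' intro!: continuous_intros)
  qed auto
  then show ?thesis by (simp add: L_def)
qed

lemma L_dt:
  assumes d: "\<And>t. ((\<lambda>t. h x t) has_real_derivative ht t) (at t)"
    and htc: "continuous_on UNIV ht"
  shows "((\<lambda>t. L h x t) has_real_derivative t * h x t) (at t)"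
proof -
  have hc: "continuous_on UNIV (h x)" using d by (meson DERIV_isCont continuous_at_imp_continuous_on)
  have "((\<lambda>t. integral (cbox 0 1) (\<lambda>r. t^2 * r * h x (t * r))) has_field_derivative
        integral (cbox 0 1) (\<lambda>r. 2 * t * r * h x (t * r) + t^2 * r * (r * ht (t * r)))) (at t within UNIV)"
  proof (rule leibniz_rule_field_derivative[where fx="\<lambda>t r. 2 * t * r * h x (t * r) + t^2 * r * (r * ht (t * r))"])
    fix t r :: real
    show "((\<lambda>t. t^2 * r * h x (t * r)) has_field_derivative 2 * t * r * h x (t * r) + t^2 * r * (r * ht (t * r))) (at t within UNIV)"
      using d[of "t*r"] by (auto intro!: derivative_eq_intros DERIV_chain2[OF d] simp: algebra_simps)
  next
    fix t :: real
    have "continuous_on (cbox 0 1) (\<lambda>r. h x (t * r))"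
      by (rule continuous_on_compose2[OF hc]) (auto intro!: continuous_intros)
    then have "continuous_on (cbox 0 1) (\<lambda>r. t^2 * r * h x (t * r))"
      by (auto intro!: continuous_intros)
    then show "(\<lambda>r. t^2 * r * h x (t * r)) integrable_on cbox 0 1"
      by (rule integrable_continuous)
  next
    have c1: "continuous_on (UNIV \<times> cbox 0 1) (\<lambda>z::real\<times>real. h x (fst z * snd z))"
      by (rule continuous_on_compose2[OF hc]) (auto intro!: continuous_intros)
    have c2: "continuous_on (UNIV \<times> cbox 0 1) (\<lambda>z::real\<times>real. ht (fst z * snd z))"
      by (rule continuous_on_compose2[OF htc]) (auto intro!: continuous_intros)
    show "continuous_on (UNIV \<times> cbox 0 1) (\<lambda>(t, r). 2 * t * r * h x (t * r) + t^2 * r * (r * ht (t * r)))"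
      using c1 c2 by (auto simp: split_beta' intro!: continuous_intros)
  qed auto
  moreover have "integral (cbox 0 1) (\<lambda>r. 2 * t * r * h x (t * r) + t^2 * r * (r * ht (t * r))) = t * h x t"
  proof -
    have "((\<lambda>r. 2 * t * r * h x (t * r) + t^2 * r * (r * ht (t * r))) has_integral
           ((\<lambda>r. t * r^2 * h x (t * r)) 1 - (\<lambda>r. t * r^2 * h x (t * r)) 0)) {0..1}"
    proof (rule fundamental_theorem_of_calculus)
      fix r :: real assume "r \<in> {0..1}"
      have "((\<lambda>r. t * r^2 * h x (t * r)) has_real_derivative 2 * t * r * h x (t * r) + t^2 * r * (r * ht (t * r))) (at r)"
        by (auto intro!: derivative_eq_intros DERIV_chain2[OF d] simp: algebra_simps power2_eq_square)
      then show "((\<lambda>r. t * r^2 * h x (t * r)) has_vector_derivative 2 * t * r * h x (t * r) + t^2 * r * (r * ht (t * r))) (at r within {0..1})"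
        by (simp add: has_real_derivative_iff_has_vector_derivative has_vector_derivative_at_within)
    qed simp
    then show ?thesis by (simp add: integral_unique)
  qed
  ultimately show ?thesis by (simp add: L_def)
qed

lemma powr_succ: "0 \<le> (c::real) \<Longrightarrow> c powr (q + 1) = c * c powr q"
  by (cases "c = 0") (auto simp: powr_add)

lemma powr_succ2: "0 \<le> (c::real) \<Longrightarrow> c powr (q + 2) = c * c * c powr q"
  by (cases "c = 0") (auto simp: powr_add power2_eq_square)

lemma cos_nonneg_I: "\<theta> \<in> {-(pi/2)..pi/2} \<Longrightarrow> 0 \<le> cos \<theta>"
  by (auto intro!: cos_ge_zero)

lemma cont_cospow: "0 < p \<Longrightarrow> continuous_on {-(pi/2)..pi/2} (\<lambda>\<theta>. cos \<theta> powr p)"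
  by (rule continuous_on_powr') (auto intro!: continuous_intros cos_nonneg_I)

lemma cont_comp_I:
  assumes "continuous_on UNIV H"
  shows "continuous_on S (\<lambda>\<theta>::real. H (x + t * sin \<theta>))"
  by (rule continuous_on_compose2[OF assms]) (auto intro!: continuous_intros)

lemma J_I1:
  assumes dH: "\<And>z. (H1 has_real_derivative H2 z) (at z)" and H2c: "continuous_on UNIV H2" and p: "0 < p"
  shows "(p+1) * J H1 (\<lambda>\<theta>. sin \<theta> * cos \<theta> powr p) x t = t * J H2 (\<lambda>\<theta>. cos \<theta> powr (p+2)) x t"
proof -
  have H1c: "continuous_on UNIV H1" using dH by (meson DERIV_isCont continuous_at_imp_continuous_on)
  define I where "I = {-(pi/2)..pi/2::real}"
  define f1 where "f1 \<theta> = H1 (x + t * sin \<theta>) * (sin \<theta> * cos \<theta> powr p)" for \<theta>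
  define f2 where "f2 \<theta> = H2 (x + t * sin \<theta>) * cos \<theta> powr (p+2)" for \<theta>
  define \<phi> where "\<phi> \<theta> = H1 (x + t * sin \<theta>) * cos \<theta> powr (p+1)" for \<theta>
  define \<phi>' where "\<phi>' \<theta> = H2 (x + t * sin \<theta>) * (t * cos \<theta>) * cos \<theta> powr (p+1)
      + H1 (x + t * sin \<theta>) * ((p+1) * cos \<theta> powr p * (- sin \<theta>))" for \<theta>
  have c1: "continuous_on I f1" unfolding f1_def I_def
    using p by (intro continuous_intros cont_comp_I[OF H1c] cont_cospow) auto
  have c2: "continuous_on I f2" unfolding f2_def I_def
    using p by (intro continuous_intros cont_comp_I[OF H2c] cont_cospow) auto
  have "(\<phi>' has_integral (\<phi> (pi/2) - \<phi> (-(pi/2)))) I"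
    unfolding I_def
  proof (rule fundamental_theorem_of_calculus_interior)
    show "continuous_on {- (pi / 2)..pi / 2} \<phi>" unfolding \<phi>_def
      using p by (intro continuous_intros cont_comp_I[OF H1c] cont_cospow) auto
  next
    fix \<theta> :: real assume \<theta>: "\<theta> \<in> {-(pi/2)<..<pi/2}"
    then have cpos: "cos \<theta> > 0" by (auto intro!: cos_gt_zero_pi)
    have "(\<phi> has_real_derivative \<phi>' \<theta>) (at \<theta>)"
      unfolding \<phi>_def \<phi>'_def using cpos
      by (auto intro!: derivative_eq_intros DERIV_chain2[OF dH] simp: algebra_simps)
    then show "(\<phi> has_vector_derivative \<phi>' \<theta>) (at \<theta>)"
      by (simp add: has_real_derivative_iff_has_vector_derivative)
  qed simp
  moreover have "\<phi> (pi/2) = 0" "\<phi> (-(pi/2)) = 0" unfolding \<phi>_def using p by auto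
  ultimately have F: "(\<phi>' has_integral 0) I" by simp
  have eq: "\<phi>' \<theta> = t * f2 \<theta> - (p+1) * f1 \<theta>" if "\<theta> \<in> I" for \<theta>
  proof -
    have c0: "0 \<le> cos \<theta>" using that by (auto simp: I_def intro!: cos_nonneg_I)
    show ?thesis unfolding \<phi>'_def f1_def f2_def
      using powr_succ[OF c0, of p] powr_succ2[OF c0, of p] by (simp add: algebra_simps)
  qed
  have "((\<lambda>\<theta>. t * f2 \<theta> - (p+1) * f1 \<theta>) has_integral (t * integral I f2 - (p+1) * integral I f1)) I"
    using c1 c2 unfolding I_def
    by (intro has_integral_diff has_integral_mult_right integrable_integral integrable_continuous_real)
  then have "(\<phi>' has_integral (t * integral I f2 - (p+1) * integral I f1)) I"
    using eq by (subst has_integral_cong[of I \<phi>']) auto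
  with F have "t * integral I f2 - (p+1) * integral I f1 = 0"
    using has_integral_unique by blast
  then show ?thesis unfolding J_def I_def f1_def f2_def by (simp add: algebra_simps)
qed

lemma J_I2:
  assumes dH: "\<And>z. (H has_real_derivative H1 z) (at z)" and H1c: "continuous_on UNIV H1" and p: "0 < p"
  shows "t * J H1 (\<lambda>\<theta>. sin \<theta> * cos \<theta> powr (p+2)) x t
         = (p+1) * J H (\<lambda>\<theta>. cos \<theta> powr p) x t - (p+2) * J H (\<lambda>\<theta>. cos \<theta> powr (p+2)) x t"
proof -
  have Hc: "continuous_on UNIV H" using dH by (meson DERIV_isCont continuous_at_imp_continuous_on)
  define I where "I = {-(pi/2)..pi/2::real}"
  define f3 where "f3 \<theta> = H1 (x + t * sin \<theta>) * (sin \<theta> * cos \<theta> powr (p+2))" for \<theta>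
  define g0 where "g0 \<theta> = H (x + t * sin \<theta>) * cos \<theta> powr p" for \<theta>
  define g2 where "g2 \<theta> = H (x + t * sin \<theta>) * cos \<theta> powr (p+2)" for \<theta>
  define \<phi> where "\<phi> \<theta> = H (x + t * sin \<theta>) * (sin \<theta> * cos \<theta> powr (p+1))" for \<theta>
  define \<phi>' where "\<phi>' \<theta> = H1 (x + t * sin \<theta>) * (t * cos \<theta>) * (sin \<theta> * cos \<theta> powr (p+1))
      + H (x + t * sin \<theta>) * (cos \<theta> * cos \<theta> powr (p+1) + sin \<theta> * ((p+1) * cos \<theta> powr p * (- sin \<theta>)))" for \<theta>
  have c3: "continuous_on I f3" unfolding f3_def I_def
    using p by (intro continuous_intros cont_comp_I[OF H1c] cont_cospow) auto
  have c0: "continuous_on I g0" unfolding g0_def I_def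
    using p by (intro continuous_intros cont_comp_I[OF Hc] cont_cospow) auto
  have c2: "continuous_on I g2" unfolding g2_def I_def
    using p by (intro continuous_intros cont_comp_I[OF Hc] cont_cospow) auto
  have "(\<phi>' has_integral (\<phi> (pi/2) - \<phi> (-(pi/2)))) I"
    unfolding I_def
  proof (rule fundamental_theorem_of_calculus_interior)
    show "continuous_on {- (pi / 2)..pi / 2} \<phi>" unfolding \<phi>_def
      using p by (intro continuous_intros cont_comp_I[OF Hc] cont_cospow) auto
  next
    fix \<theta> :: real assume \<theta>: "\<theta> \<in> {-(pi/2)<..<pi/2}"
    then have cpos: "cos \<theta> > 0" by (auto intro!: cos_gt_zero_pi)
    have "(\<phi> has_real_derivative \<phi>' \<theta>) (at \<theta>)"
      unfolding \<phi>_def \<phi>'_def using cpos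
      by (auto intro!: derivative_eq_intros DERIV_chain2[OF dH] simp: algebra_simps)
    then show "(\<phi> has_vector_derivative \<phi>' \<theta>) (at \<theta>)"
      by (simp add: has_real_derivative_iff_has_vector_derivative)
  qed simp
  moreover have "\<phi> (pi/2) = 0" "\<phi> (-(pi/2)) = 0" unfolding \<phi>_def using p by auto
  ultimately have F: "(\<phi>' has_integral 0) I" by simp
  have eq: "\<phi>' \<theta> = t * f3 \<theta> + (p+2) * g2 \<theta> - (p+1) * g0 \<theta>" if "\<theta> \<in> I" for \<theta>
  proof -
    have cc: "0 \<le> cos \<theta>" using that by (auto simp: I_def intro!: cos_nonneg_I)
    have s2: "sin \<theta> * (sin \<theta> * X) = X - cos \<theta> * (cos \<theta> * X)" for X
    proof -
      have "sin \<theta> * sin \<theta> = 1 - cos \<theta> * cos \<theta>" using sin_cos_squared_add[of \<theta>]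
        by (simp add: power2_eq_square)
      then show ?thesis by (metis mult.assoc mult_1 left_diff_distrib)
    qed
    show ?thesis unfolding \<phi>'_def f3_def g0_def g2_def
      using powr_succ[OF cc, of p] powr_succ2[OF cc, of p]
      by (simp add: algebra_simps s2)
  qed
  have "((\<lambda>\<theta>. t * f3 \<theta> + (p+2) * g2 \<theta> - (p+1) * g0 \<theta>) has_integral
        (t * integral I f3 + (p+2) * integral I g2 - (p+1) * integral I g0)) I"
    using c3 c0 c2 unfolding I_def
    by (intro has_integral_diff has_integral_add has_integral_mult_right integrable_integral integrable_continuous_real)
  then have "(\<phi>' has_integral (t * integral I f3 + (p+2) * integral I g2 - (p+1) * integral I g0)) I"
    using eq by (subst has_integral_cong[of I \<phi>']) auto
  with F have "t * integral I f3 + (p+2) * integral I g2 - (p+1) * integral I g0 = 0"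
    using has_integral_unique by blast
  then show ?thesis unfolding J_def I_def f3_def g0_def g2_def by (simp add: algebra_simps)
qed

lemma cospow_int_pos: "0 < p \<Longrightarrow> 0 < integral {-(pi/2)..pi/2} (\<lambda>\<theta>. cos \<theta> powr p)"
proof -
  assume p: "0 < p"
  have "integral (cbox (-(pi/2)) (pi/2)) (\<lambda>\<theta>. 0::real) < integral (cbox (-(pi/2)) (pi/2)) (\<lambda>\<theta>. cos \<theta> powr p)"
  proof (rule integral_less)
    show "continuous_on (cbox (-(pi/2)) (pi/2)) (\<lambda>\<theta>. cos \<theta> powr p)" using cont_cospow[OF p] by simp
    fix \<theta> :: real assume "\<theta> \<in> box (-(pi/2)) (pi/2)"
    then have "cos \<theta> > 0" by (auto intro!: cos_gt_zero_pi)
    then show "0 < cos \<theta> powr p" by simp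
  next
    show "box (-(pi/2)) (pi/2) \<noteq> ({}::real set)" by (simp add: box_ne_empty not_le)
  qed (auto intro: continuous_intros)
  then show ?thesis by simp
qed



lemma J_cong_w:
  assumes "\<And>\<theta>. \<theta> \<in> {-(pi/2)..pi/2} \<Longrightarrow> w1 \<theta> = w2 \<theta>"
  shows "J h w1 x t = J h w2 x t"
  unfolding J_def using assms by (intro integral_cong) auto

lemma J_diff_w:
  assumes h: "continuous_on UNIV h" and w1: "continuous_on {-(pi/2)..pi/2} w1" and w2: "continuous_on {-(pi/2)..pi/2} w2"
  shows "J h w1 x t - J h w2 x t = J h (\<lambda>\<theta>. w1 \<theta> - w2 \<theta>) x t"
proof -
  have i1: "(\<lambda>\<theta>. h (x + t * sin \<theta>) * w1 \<theta>) integrable_on {-(pi/2)..pi/2}"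
    by (intro integrable_continuous_real continuous_intros cont_comp_I[OF h] w1)
  have i2: "(\<lambda>\<theta>. h (x + t * sin \<theta>) * w2 \<theta>) integrable_on {-(pi/2)..pi/2}"
    by (intro integrable_continuous_real continuous_intros cont_comp_I[OF h] w2)
  show ?thesis unfolding J_def
    using integral_diff[OF i1 i2] by (simp add: algebra_simps)
qed

lemma J_zero: "J h w x 0 = h x * integral {-(pi/2)..pi/2} w"
  unfolding J_def by simp

lemma L_zero: "L h x 0 = 0"
  unfolding L_def by simp

definition wa :: "real \<Rightarrow> real" where "wa \<theta> = cos \<theta> powr (4/3)"
definition B1 :: real where "B1 = integral {-(pi/2)..pi/2} wa"
definition KK :: real where "KK = 3 / (4 * B1)"

lemma B1_pos: "B1 > 0"
  unfolding B1_def wa_def by (rule cospow_int_pos) simp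

lemma wa_cont: "continuous_on {-(pi/2)..pi/2} wa"
  unfolding wa_def by (rule cont_cospow) simp

lemma swa_cont: "continuous_on {-(pi/2)..pi/2} (\<lambda>\<theta>. sin \<theta> * wa \<theta>)"
  using wa_cont by (intro continuous_intros)

definition Z :: "(real \<Rightarrow> real) \<Rightarrow> (real \<Rightarrow> real) \<Rightarrow> (real \<Rightarrow> real) \<Rightarrow> real \<Rightarrow> real \<Rightarrow> real" where
  "Z H H1 H2 x t = H x + KK * L (J H2 wa) x t - 4/3 * KK * J H wa x t - KK * t * J H1 (\<lambda>\<theta>. sin \<theta> * wa \<theta>) x t"

lemma Z_zero:
  assumes d0: "\<And>z. (H has_real_derivative H1 z) (at z)"
    and d1: "\<And>z. (H1 has_real_derivative H2 z) (at z)"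
    and d2: "\<And>z. (H2 has_real_derivative H3 z) (at z)"
    and c3: "continuous_on UNIV H3"
  shows "Z H H1 H2 x t = 0"
proof -
  have c2: "continuous_on UNIV H2" using d2 by (meson DERIV_isCont continuous_at_imp_continuous_on)
  have c1: "continuous_on UNIV H1" using d1 by (meson DERIV_isCont continuous_at_imp_continuous_on)
  have ssw: "continuous_on {-(pi/2)..pi/2} (\<lambda>\<theta>. sin \<theta> * (sin \<theta> * wa \<theta>))"
    using wa_cont by (intro continuous_intros)
  have wd: "continuous_on {-(pi/2)..pi/2} (\<lambda>\<theta>. cos \<theta> powr (4/3 + 2))"
    by (rule cont_cospow) simp
  have D: "((\<lambda>t. Z H H1 H2 x t) has_real_derivative 0) (at t)" for t
  proof -
    have dL: "((\<lambda>t. L (J H2 wa) x t) has_real_derivative t * J H2 wa x t) (at t)"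
      by (rule L_dt[OF J_dt[OF d2 c3 wa_cont]]) (rule cont2_compose[OF J_cont[OF c3 swa_cont]], auto intro!: continuous_intros)
    have dJ0: "((\<lambda>t. J H wa x t) has_real_derivative J H1 (\<lambda>\<theta>. sin \<theta> * wa \<theta>) x t) (at t)"
      by (rule J_dt[OF d0 c1 wa_cont])
    have dJ1: "((\<lambda>t. J H1 (\<lambda>\<theta>. sin \<theta> * wa \<theta>) x t) has_real_derivative J H2 (\<lambda>\<theta>. sin \<theta> * (sin \<theta> * wa \<theta>)) x t) (at t)"
      by (rule J_dt[OF d1 c2 swa_cont])
    have "((\<lambda>t. Z H H1 H2 x t) has_real_derivative
       ((0 + KK * (t * J H2 wa x t)) - 4/3 * KK * J H1 (\<lambda>\<theta>. sin \<theta> * wa \<theta>) x t)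
       - (KK * 1 * J H1 (\<lambda>\<theta>. sin \<theta> * wa \<theta>) x t + J H2 (\<lambda>\<theta>. sin \<theta> * (sin \<theta> * wa \<theta>)) x t * (KK * t))) (at t)"
      unfolding Z_def
      by (rule DERIV_diff[OF DERIV_diff[OF DERIV_add[OF DERIV_const DERIV_cmult[OF dL]] DERIV_cmult[OF dJ0]] DERIV_mult[OF DERIV_cmult[OF DERIV_ident] dJ1]])
    moreover have "((0 + KK * (t * J H2 wa x t)) - 4/3 * KK * J H1 (\<lambda>\<theta>. sin \<theta> * wa \<theta>) x t)
       - (KK * 1 * J H1 (\<lambda>\<theta>. sin \<theta> * wa \<theta>) x t + J H2 (\<lambda>\<theta>. sin \<theta> * (sin \<theta> * wa \<theta>)) x t * (KK * t)) = 0"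
    proof -
      have I1: "(4/3 + 1) * J H1 (\<lambda>\<theta>. sin \<theta> * cos \<theta> powr (4/3)) x t = t * J H2 (\<lambda>\<theta>. cos \<theta> powr (4/3 + 2)) x t"
        by (rule J_I1[OF d1 c2]) simp
      have E: "J H2 wa x t - J H2 (\<lambda>\<theta>. sin \<theta> * (sin \<theta> * wa \<theta>)) x t = J H2 (\<lambda>\<theta>. cos \<theta> powr (4/3 + 2)) x t"
      proof -
        have "J H2 wa x t - J H2 (\<lambda>\<theta>. sin \<theta> * (sin \<theta> * wa \<theta>)) x t = J H2 (\<lambda>\<theta>. wa \<theta> - sin \<theta> * (sin \<theta> * wa \<theta>)) x t"
          by (rule J_diff_w[OF c2 wa_cont ssw])
        also have "\<dots> = J H2 (\<lambda>\<theta>. cos \<theta> powr (4/3 + 2)) x t"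
        proof (rule J_cong_w)
          fix \<theta> :: real assume "\<theta> \<in> {-(pi/2)..pi/2}"
          then have cc: "0 \<le> cos \<theta>" by (rule cos_nonneg_I)
          have sc: "sin \<theta> * sin \<theta> = 1 - cos \<theta> * cos \<theta>" using sin_cos_squared_add[of \<theta>]
            by (simp add: power2_eq_square)
          have "wa \<theta> - sin \<theta> * (sin \<theta> * wa \<theta>) = (1 - sin \<theta> * sin \<theta>) * wa \<theta>"
            by (simp add: algebra_simps)
          also have "\<dots> = cos \<theta> * cos \<theta> * wa \<theta>" using sc by simp
          also have "\<dots> = cos \<theta> powr (4/3 + 2)" using powr_succ2[OF cc, of "4/3"] by (simp add: wa_def)
          finally show "wa \<theta> - sin \<theta> * (sin \<theta> * wa \<theta>) = cos \<theta> powr (4/3 + 2)" .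
        qed
        finally show ?thesis .
      qed
      have "J H1 (\<lambda>\<theta>. sin \<theta> * wa \<theta>) x t = J H1 (\<lambda>\<theta>. sin \<theta> * cos \<theta> powr (4/3)) x t"
        by (simp add: wa_def)
      then have e2: "7/3 * J H1 (\<lambda>\<theta>. sin \<theta> * wa \<theta>) x t = t * J H2 (\<lambda>\<theta>. cos \<theta> powr (4/3 + 2)) x t"
        using I1 by simp
      have e1: "t * J H2 wa x t - t * J H2 (\<lambda>\<theta>. sin \<theta> * (sin \<theta> * wa \<theta>)) x t = t * J H2 (\<lambda>\<theta>. cos \<theta> powr (4/3 + 2)) x t"
        using E by (metis right_diff_distrib)
      have "((0 + KK * (t * J H2 wa x t)) - 4/3 * KK * J H1 (\<lambda>\<theta>. sin \<theta> * wa \<theta>) x t)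
       - (KK * 1 * J H1 (\<lambda>\<theta>. sin \<theta> * wa \<theta>) x t + J H2 (\<lambda>\<theta>. sin \<theta> * (sin \<theta> * wa \<theta>)) x t * (KK * t))
       = KK * ((t * J H2 wa x t - t * J H2 (\<lambda>\<theta>. sin \<theta> * (sin \<theta> * wa \<theta>)) x t) - 7/3 * J H1 (\<lambda>\<theta>. sin \<theta> * wa \<theta>) x t)"
        by (simp add: algebra_simps)
      then show ?thesis unfolding e1 e2 by simp
    qed
    ultimately show ?thesis by (rule DERIV_cong)
  qed
  have "\<exists>c. \<forall>t\<in>UNIV. Z H H1 H2 x t = c"
    by (rule has_field_derivative_zero_constant) (use D in auto)
  then obtain c where cc: "\<And>t. Z H H1 H2 x t = c" by auto
  have "Z H H1 H2 x 0 = 0"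
    using B1_pos unfolding Z_def L_zero J_zero KK_def B1_def[symmetric] by simp
  then show ?thesis using cc by metis
qed

lemma Z_dx:
  assumes d0: "\<And>z. (H has_real_derivative H1 z) (at z)"
    and d1: "\<And>z. (H1 has_real_derivative H2 z) (at z)"
    and d2: "\<And>z. (H2 has_real_derivative H3 z) (at z)"
    and c3: "continuous_on UNIV H3"
  shows "((\<lambda>x. Z H H1 H2 x t) has_real_derivative Z H1 H2 H3 x t) (at x)"
proof -
  have c2: "continuous_on UNIV H2" using d2 by (meson DERIV_isCont continuous_at_imp_continuous_on)
  have c1: "continuous_on UNIV H1" using d1 by (meson DERIV_isCont continuous_at_imp_continuous_on)
  have dL: "((\<lambda>x. L (J H2 wa) x t) has_real_derivative L (J H3 wa) x t) (at x)"
    by (rule L_dx[OF J_dx[OF d2 c3 wa_cont] J_cont[OF c2 wa_cont] J_cont[OF c3 wa_cont]])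
  have dJ0: "((\<lambda>x. J H wa x t) has_real_derivative J H1 wa x t) (at x)"
    by (rule J_dx[OF d0 c1 wa_cont])
  have dJ1: "((\<lambda>x. J H1 (\<lambda>\<theta>. sin \<theta> * wa \<theta>) x t) has_real_derivative J H2 (\<lambda>\<theta>. sin \<theta> * wa \<theta>) x t) (at x)"
    by (rule J_dx[OF d1 c2 swa_cont])
  have "((\<lambda>x. Z H H1 H2 x t) has_real_derivative
     ((H1 x + KK * L (J H3 wa) x t) - 4/3 * KK * J H1 wa x t) - KK * t * J H2 (\<lambda>\<theta>. sin \<theta> * wa \<theta>) x t) (at x)"
    unfolding Z_def
    by (rule DERIV_diff[OF DERIV_diff[OF DERIV_add[OF d0 DERIV_cmult[OF dL]] DERIV_cmult[OF dJ0]] DERIV_cmult[OF dJ1]])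
  then show ?thesis by (simp add: Z_def)
qed

lemma Z_final:
  assumes d0: "\<And>z. (F0 has_real_derivative F1 z) (at z)"
    and d1: "\<And>z. (F1 has_real_derivative F2 z) (at z)"
    and d2: "\<And>z. (F2 has_real_derivative F3 z) (at z)"
    and d3: "\<And>z. (F3 has_real_derivative F4 z) (at z)"
    and c4: "continuous_on UNIV F4"
  shows "Z F2 F3 F4 x t = 0"
proof -
  have c3: "continuous_on UNIV F3" using d3 by (meson DERIV_isCont continuous_at_imp_continuous_on)
  have z0: "\<And>x. Z F0 F1 F2 x t = 0" by (rule Z_zero[OF d0 d1 d2 c3])
  have z1: "Z F1 F2 F3 x t = 0" for x
  proof -
    have "((\<lambda>x. Z F0 F1 F2 x t) has_real_derivative Z F1 F2 F3 x t) (at x)" by (rule Z_dx[OF d0 d1 d2 c3])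
    then have "((\<lambda>x. 0) has_real_derivative Z F1 F2 F3 x t) (at x)" using z0 by simp
    then show ?thesis using DERIV_const DERIV_unique by blast
  qed
  have "((\<lambda>x. Z F1 F2 F3 x t) has_real_derivative Z F2 F3 F4 x t) (at x)" by (rule Z_dx[OF d1 d2 d3 c4])
  then have "((\<lambda>x. 0) has_real_derivative Z F2 F3 F4 x t) (at x)" using z1 by simp
  then show ?thesis using DERIV_const DERIV_unique by blast
qed

definition sg :: "real \<Rightarrow> real" where "sg y = 2/3 * (-y) * sqrt (-y)"

lemma sg_cont: "continuous_on S sg"
  unfolding sg_def by (intro continuous_intros)

lemma sg_zero[simp]: "sg 0 = 0" by (simp add: sg_def)

lemma sg_deriv:
  assumes y: "y \<le> 0"
  shows "(sg has_real_derivative - sqrt (-y)) (at y within {..0})"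
proof (cases "y = 0")
  case False
  then have yn: "y < 0" using y by simp
  have "(sg has_real_derivative - sqrt (-y)) (at y)"
  proof -
    have s: "sqrt (-y) > 0" using yn by simp
    have d1: "((\<lambda>y. sqrt (-y)) has_real_derivative inverse (sqrt (-y)) / 2 * (-1)) (at y)"
      by (rule DERIV_chain2[OF DERIV_real_sqrt DERIV_minus[OF DERIV_ident]]) (use yn in simp)
    have d2: "((\<lambda>y. 2/3 * (-y)) has_real_derivative 2/3 * (-1)) (at y)"
      by (rule DERIV_cmult[OF DERIV_minus[OF DERIV_ident]])
    have d3: "((\<lambda>y. 2/3 * (-y) * sqrt (-y)) has_real_derivative
       (2/3 * (-1)) * sqrt (-y) + (inverse (sqrt (-y)) / 2 * (-1)) * (2/3 * (-y))) (at y)"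
      by (rule DERIV_mult[OF d2 d1])
    have e: "(-y) * inverse (sqrt (-y)) = sqrt (-y)"
    proof -
      show ?thesis using real_div_sqrt[of "-y"] yn by (simp add: divide_inverse)
    qed
    have "(2/3 * (-1)) * sqrt (-y) + (inverse (sqrt (-y)) / 2 * (-1)) * (2/3 * (-y)) = - sqrt (-y)"
    proof -
      have "(inverse (sqrt (-y)) / 2 * (-1)) * (2/3 * (-y)) = - (1/3) * ((-y) * inverse (sqrt (-y)))"
        by simp
      then show ?thesis unfolding e by simp
    qed
    then show ?thesis using d3 unfolding sg_def by simp
  qed
  then show ?thesis by (rule has_field_derivative_at_within)
next
  case True
  have "((\<lambda>z. (sg z - sg 0) / (z - 0)) \<longlongrightarrow> 0) (at 0 within {..0})"
  proof -
    have ev: "\<forall>\<^sub>F z in at 0 within {..0}. - (2/3) * sqrt (-z) = (sg z - sg 0) / (z - 0)"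
      unfolding eventually_at_filter by (auto simp: sg_def)
    have "((\<lambda>z. - (2/3) * sqrt (-z)) \<longlongrightarrow> - (2/3) * sqrt (-0)) (at 0 within {..0})"
      by (intro tendsto_intros)
    then have "((\<lambda>z. - (2/3) * sqrt (-z)) \<longlongrightarrow> 0) (at 0 within {..0})" by simp
    then show ?thesis using ev by (rule Lim_transform_eventually)
  qed
  then show ?thesis using True by (simp add: has_field_derivative_iff)
qed

lemma sg_sqrt: "y \<le> 0 \<Longrightarrow> sg y * sqrt (-y) = 2/3 * y^2"
  unfolding sg_def by (simp add: mult.assoc power2_eq_square)

lemma y2_sqrt: "y^2 * sqrt (-y) = - (3/2) * y * sg y"
  unfolding sg_def by (simp add: power2_eq_square)

lemma cont2_sg:
  fixes f :: "real \<Rightarrow> real \<Rightarrow> real"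
  assumes "continuous_on UNIV (\<lambda>p. f (fst p) (snd p))"
  shows "continuous_on S (\<lambda>p::real\<times>real. f (fst p) (sg (snd p)))"
  by (rule cont2_compose[OF assms]) (auto intro!: continuous_intros continuous_on_compose2[OF sg_cont])

lemma partials2:
  fixes f fx fy :: "real \<times> real \<Rightarrow> real"
  assumes dx: "\<And>x y. y \<le> 0 \<Longrightarrow> ((\<lambda>x. f (x,y)) has_real_derivative fx (x,y)) (at x)"
    and dy: "\<And>x y. y \<le> 0 \<Longrightarrow> ((\<lambda>y. f (x,y)) has_real_derivative fy (x,y)) (at y within {..0})"
    and c: "continuous_on (UNIV \<times> {..0}) fy"
    and p: "p \<in> UNIV \<times> {..0}"
  shows "(f has_derivative (\<lambda>(h,k). fx p * h + fy p * k)) (at p within UNIV \<times> {..0})"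
proof -
  obtain x y where pxy: "p = (x,y)" and y: "y \<le> 0" using p by auto
  have c2: "continuous_on (UNIV \<times> {..0}) (\<lambda>(x, y). blinfun_mult_left (fy (x,y)))"
    using continuous_on_compose[OF c linear_continuous_on[OF bounded_linear_blinfun_mult_left]]
    by (simp add: o_def split_beta')
  have "((\<lambda>(x, y). f (x,y)) has_derivative (\<lambda>(tx, ty). (\<lambda>h. fx (x,y) * h) tx + blinfun_apply (blinfun_mult_left (fy (x,y))) ty)) (at (x, y) within UNIV \<times> {..0})"
  proof (rule has_derivative_partialsI)
    show "((\<lambda>x. f (x, y)) has_derivative (*) (fx (x, y))) (at x within UNIV)"
      using dx[OF y] by (simp add: has_field_derivative_def)
    show "((\<lambda>y. f (x, y)) has_derivative blinfun_apply (blinfun_mult_left (fy (x, y)))) (at y within {..0})"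
      if "x \<in> UNIV" "y \<in> {..0}" for x y
    proof -
      have "(\<lambda>k. k * fy (x,y)) = (*) (fy (x,y))" by (auto simp: mult.commute)
      then show ?thesis using dy[of y x] that by (simp add: has_field_derivative_def)
    qed
    show "continuous (at (x, y) within UNIV \<times> {..0}) (\<lambda>(x, y). blinfun_mult_left (fy (x, y)))"
    proof -
      have e: "(\<lambda>(x, y). blinfun_mult_left (fy (x, y))) = (\<lambda>p. blinfun_mult_left (fy p))" by auto
      show ?thesis using c2 y unfolding e by (simp add: continuous_on_eq_continuous_within)
    qed
  qed (use y in auto)
  then show ?thesis using pxy by (simp add: split_beta' mult.commute)
qed


lemma contF_fst:
  fixes f :: "real \<Rightarrow> real"
  assumes "continuous_on UNIV f"
  shows "continuous_on S (\<lambda>p::real\<times>real. f (fst p))"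
  by (rule continuous_on_compose2[OF assms]) (auto intro!: continuous_intros)

lemma main:
  fixes F0 F1 F2 F3 F4 G0 G1 G2 G3 :: "real \<Rightarrow> real" and D :: "(real \<times> real) set"
  assumes dF0: "\<And>z. (F0 has_real_derivative F1 z) (at z)"
    and dF1: "\<And>z. (F1 has_real_derivative F2 z) (at z)"
    and dF2: "\<And>z. (F2 has_real_derivative F3 z) (at z)"
    and dF3: "\<And>z. (F3 has_real_derivative F4 z) (at z)"
    and cF4: "continuous_on UNIV F4"
    and dG0: "\<And>z. (G0 has_real_derivative G1 z) (at z)"
    and dG1: "\<And>z. (G1 has_real_derivative G2 z) (at z)"
    and dG2: "\<And>z. (G2 has_real_derivative G3 z) (at z)"
    and cG3: "continuous_on UNIV G3"
    and DD: "D \<subseteq> UNIV \<times> {..0}"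
    and bd: "\<forall>x\<in>{x1..x2}. F0 x = u0 x \<and> G0 x = u1 x"
  shows "\<exists>u. tricomi_classical_solution x1 x2 u0 u1 D u"
proof -
  have cF3: "continuous_on UNIV F3" using dF3 by (meson DERIV_isCont continuous_at_imp_continuous_on)
  have cF2: "continuous_on UNIV F2" using dF2 by (meson DERIV_isCont continuous_at_imp_continuous_on)
  have cF1: "continuous_on UNIV F1" using dF1 by (meson DERIV_isCont continuous_at_imp_continuous_on)
  have cF0: "continuous_on UNIV F0" using dF0 by (meson DERIV_isCont continuous_at_imp_continuous_on)
  have cG2: "continuous_on UNIV G2" using dG2 by (meson DERIV_isCont continuous_at_imp_continuous_on)
  have cG1: "continuous_on UNIV G1" using dG1 by (meson DERIV_isCont continuous_at_imp_continuous_on)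
  have cG0: "continuous_on UNIV G0" using dG0 by (meson DERIV_isCont continuous_at_imp_continuous_on)
  define wb :: "real \<Rightarrow> real" where "wb \<theta> = cos \<theta> powr (2/3)" for \<theta>
  define wc :: "real \<Rightarrow> real" where "wc \<theta> = cos \<theta> powr (8/3)" for \<theta>
  define B2 where "B2 = integral {-(pi/2)..pi/2} wb"
  define cc where "cc = 1 / B2"
  have B2pos: "B2 > 0" unfolding B2_def wb_def by (rule cospow_int_pos) simp
  have wb_cont: "continuous_on {-(pi/2)..pi/2} wb" unfolding wb_def by (rule cont_cospow) simp
  have wc_cont: "continuous_on {-(pi/2)..pi/2} wc" unfolding wc_def by (rule cont_cospow) simp
  have swb_cont: "continuous_on {-(pi/2)..pi/2} (\<lambda>\<theta>. sin \<theta> * wb \<theta>)" using wb_cont by (intro continuous_intros)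
  have swc_cont: "continuous_on {-(pi/2)..pi/2} (\<lambda>\<theta>. sin \<theta> * wc \<theta>)" using wc_cont by (intro continuous_intros)
  define P where "P = J F2 wa"
  define Px where "Px = J F3 wa"
  define Pxx where "Pxx = J F4 wa"
  define Pt where "Pt = J F3 (\<lambda>\<theta>. sin \<theta> * wa \<theta>)"
  define Pxt where "Pxt = J F4 (\<lambda>\<theta>. sin \<theta> * wa \<theta>)"
  define Q where "Q = J G0 wb"
  define Qx where "Qx = J G1 wb"
  define Qxx where "Qxx = J G2 wb"
  define Qt where "Qt = J G1 (\<lambda>\<theta>. sin \<theta> * wb \<theta>)"
  define Qxt where "Qxt = J G2 (\<lambda>\<theta>. sin \<theta> * wb \<theta>)"
  define R where "R = J G2 wc"
  define Rx where "Rx = J G3 wc"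
  define Rt where "Rt = J G3 (\<lambda>\<theta>. sin \<theta> * wc \<theta>)"
  have cP: "continuous_on UNIV (\<lambda>p. P (fst p) (snd p))" unfolding P_def by (rule J_cont[OF cF2 wa_cont])
  have cPx: "continuous_on UNIV (\<lambda>p. Px (fst p) (snd p))" unfolding Px_def by (rule J_cont[OF cF3 wa_cont])
  have cPxx: "continuous_on UNIV (\<lambda>p. Pxx (fst p) (snd p))" unfolding Pxx_def by (rule J_cont[OF cF4 wa_cont])
  have cPt: "continuous_on UNIV (\<lambda>p. Pt (fst p) (snd p))" unfolding Pt_def by (rule J_cont[OF cF3 swa_cont])
  have cPxt: "continuous_on UNIV (\<lambda>p. Pxt (fst p) (snd p))" unfolding Pxt_def by (rule J_cont[OF cF4 swa_cont])
  have cQ: "continuous_on UNIV (\<lambda>p. Q (fst p) (snd p))" unfolding Q_def by (rule J_cont[OF cG0 wb_cont])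
  have cQx: "continuous_on UNIV (\<lambda>p. Qx (fst p) (snd p))" unfolding Qx_def by (rule J_cont[OF cG1 wb_cont])
  have cQxx: "continuous_on UNIV (\<lambda>p. Qxx (fst p) (snd p))" unfolding Qxx_def by (rule J_cont[OF cG2 wb_cont])
  have cQt: "continuous_on UNIV (\<lambda>p. Qt (fst p) (snd p))" unfolding Qt_def by (rule J_cont[OF cG1 swb_cont])
  have cQxt: "continuous_on UNIV (\<lambda>p. Qxt (fst p) (snd p))" unfolding Qxt_def by (rule J_cont[OF cG2 swb_cont])
  have cR: "continuous_on UNIV (\<lambda>p. R (fst p) (snd p))" unfolding R_def by (rule J_cont[OF cG2 wc_cont])
  have cRx: "continuous_on UNIV (\<lambda>p. Rx (fst p) (snd p))" unfolding Rx_def by (rule J_cont[OF cG3 wc_cont])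
  have cRt: "continuous_on UNIV (\<lambda>p. Rt (fst p) (snd p))" unfolding Rt_def by (rule J_cont[OF cG3 swc_cont])
  have cLP: "continuous_on UNIV (\<lambda>p. L P (fst p) (snd p))" by (rule L_cont[OF cP])
  have cLPx: "continuous_on UNIV (\<lambda>p. L Px (fst p) (snd p))" by (rule L_cont[OF cPx])
  have cLPxx: "continuous_on UNIV (\<lambda>p. L Pxx (fst p) (snd p))" by (rule L_cont[OF cPxx])
  have xP: "((\<lambda>x. P x t) has_real_derivative Px x t) (at x)" for x t
    unfolding P_def Px_def by (rule J_dx[OF dF2 cF3 wa_cont])
  have xPx: "((\<lambda>x. Px x t) has_real_derivative Pxx x t) (at x)" for x t
    unfolding Px_def Pxx_def by (rule J_dx[OF dF3 cF4 wa_cont])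
  have xQ: "((\<lambda>x. Q x t) has_real_derivative Qx x t) (at x)" for x t
    unfolding Q_def Qx_def by (rule J_dx[OF dG0 cG1 wb_cont])
  have xQx: "((\<lambda>x. Qx x t) has_real_derivative Qxx x t) (at x)" for x t
    unfolding Qx_def Qxx_def by (rule J_dx[OF dG1 cG2 wb_cont])
  have xR: "((\<lambda>x. R x t) has_real_derivative Rx x t) (at x)" for x t
    unfolding R_def Rx_def by (rule J_dx[OF dG2 cG3 wc_cont])
  have xLP: "((\<lambda>x. L P x t) has_real_derivative L Px x t) (at x)" for x t
    by (rule L_dx[OF xP cP cPx])
  have xLPx: "((\<lambda>x. L Px x t) has_real_derivative L Pxx x t) (at x)" for x t
    by (rule L_dx[OF xPx cPx cPxx])
  have tP: "((\<lambda>t. P x t) has_real_derivative Pt x t) (at t)" for x t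
    unfolding P_def Pt_def by (rule J_dt[OF dF2 cF3 wa_cont])
  have tPx: "((\<lambda>t. Px x t) has_real_derivative Pxt x t) (at t)" for x t
    unfolding Px_def Pxt_def by (rule J_dt[OF dF3 cF4 wa_cont])
  have tQ: "((\<lambda>t. Q x t) has_real_derivative Qt x t) (at t)" for x t
    unfolding Q_def Qt_def by (rule J_dt[OF dG0 cG1 wb_cont])
  have tQx: "((\<lambda>t. Qx x t) has_real_derivative Qxt x t) (at t)" for x t
    unfolding Qx_def Qxt_def by (rule J_dt[OF dG1 cG2 wb_cont])
  have tR: "((\<lambda>t. R x t) has_real_derivative Rt x t) (at t)" for x t
    unfolding R_def Rt_def by (rule J_dt[OF dG2 cG3 wc_cont])
  have tLP: "((\<lambda>t. L P x t) has_real_derivative t * P x t) (at t)" for x t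
    by (rule L_dt[OF tP]) (rule cont2_compose[OF cPt], auto intro!: continuous_intros)
  have tLPx: "((\<lambda>t. L Px x t) has_real_derivative t * Px x t) (at t)" for x t
    by (rule L_dt[OF tPx]) (rule cont2_compose[OF cPxt], auto intro!: continuous_intros)
  have QtR: "Qt x t = 3/5 * t * R x t" for x t
    using J_I1[OF dG1 cG2, of "2/3" x t] unfolding Qt_def R_def wb_def wc_def by simp
  have QxtRx: "Qxt x t = 3/5 * t * Rx x t" for x t
    using J_I1[OF dG2 cG3, of "2/3" x t] unfolding Qxt_def Rx_def wb_def wc_def by simp
  have RtI: "t * Rt x t = 5/3 * Qxx x t - 8/3 * R x t" for x t
    using J_I2[OF dG2 cG3, of "2/3" t x] unfolding Rt_def Qxx_def R_def wb_def wc_def by simp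
  have ZI: "F2 x + KK * L Pxx x t - 4/3 * KK * P x t - KK * t * Pt x t = 0" for x t
    using Z_final[OF dF0 dF1 dF2 dF3 cF4, of x t] unfolding Z_def Pxx_def P_def Pt_def by simp

  define u where "u = (\<lambda>p. F0 (fst p) + KK * L P (fst p) (sg (snd p)) + cc * snd p * Q (fst p) (sg (snd p)))"
  define ux where "ux = (\<lambda>p. F1 (fst p) + KK * L Px (fst p) (sg (snd p)) + cc * snd p * Qx (fst p) (sg (snd p)))"
  define uy where "uy = (\<lambda>p. - (2/3) * KK * (snd p)^2 * P (fst p) (sg (snd p)) + cc * (Q (fst p) (sg (snd p)) - 2/5 * (snd p)^3 * R (fst p) (sg (snd p))))"
  define uxx where "uxx = (\<lambda>p. F2 (fst p) + KK * L Pxx (fst p) (sg (snd p)) + cc * snd p * Qxx (fst p) (sg (snd p)))"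
  define uxy where "uxy = (\<lambda>p. - (2/3) * KK * (snd p)^2 * Px (fst p) (sg (snd p)) + cc * (Qx (fst p) (sg (snd p)) - 2/5 * (snd p)^3 * Rx (fst p) (sg (snd p))))"
  define uyy where "uyy = (\<lambda>p. - (2/3) * KK * (2 * snd p * P (fst p) (sg (snd p)) + (snd p)^2 * (Pt (fst p) (sg (snd p)) * - sqrt (- snd p)))
      + cc * (Qt (fst p) (sg (snd p)) * - sqrt (- snd p) - 2/5 * (3 * (snd p)^2 * R (fst p) (sg (snd p)) + (snd p)^3 * (Rt (fst p) (sg (snd p)) * - sqrt (- snd p)))))"
  have cu: "continuous_on UNIV u" unfolding u_def
    by (intro continuous_intros contF_fst[OF cF0] cont2_sg[OF cLP] cont2_sg[OF cQ])
  have cux: "continuous_on UNIV ux" unfolding ux_def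
    by (intro continuous_intros contF_fst[OF cF1] cont2_sg[OF cLPx] cont2_sg[OF cQx])
  have cuy: "continuous_on UNIV uy" unfolding uy_def
    by (intro continuous_intros cont2_sg[OF cP] cont2_sg[OF cQ] cont2_sg[OF cR])
  have cuxx: "continuous_on UNIV uxx" unfolding uxx_def
    by (intro continuous_intros contF_fst[OF cF2] cont2_sg[OF cLPxx] cont2_sg[OF cQxx])
  have cuxy: "continuous_on UNIV uxy" unfolding uxy_def
    by (intro continuous_intros cont2_sg[OF cPx] cont2_sg[OF cQx] cont2_sg[OF cRx])
  have cuyy: "continuous_on UNIV uyy" unfolding uyy_def
    by (intro continuous_intros cont2_sg[OF cP] cont2_sg[OF cPt] cont2_sg[OF cQt] cont2_sg[OF cR] cont2_sg[OF cRt])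
  have ux_d: "((\<lambda>x. u (x,y)) has_real_derivative ux (x,y)) (at x)" for x y
  proof -
    have "((\<lambda>x. F0 x + KK * L P x (sg y) + (cc * y) * Q x (sg y)) has_real_derivative
        F1 x + KK * L Px x (sg y) + (cc * y) * Qx x (sg y)) (at x)"
      by (rule DERIV_add[OF DERIV_add[OF dF0 DERIV_cmult[OF xLP]] DERIV_cmult[OF xQ]])
    then show ?thesis by (simp add: u_def ux_def)
  qed
  have uxx_d: "((\<lambda>x. ux (x,y)) has_real_derivative uxx (x,y)) (at x)" for x y
  proof -
    have "((\<lambda>x. F1 x + KK * L Px x (sg y) + (cc * y) * Qx x (sg y)) has_real_derivative
        F2 x + KK * L Pxx x (sg y) + (cc * y) * Qxx x (sg y)) (at x)"
      by (rule DERIV_add[OF DERIV_add[OF dF1 DERIV_cmult[OF xLPx]] DERIV_cmult[OF xQx]])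
    then show ?thesis by (simp add: ux_def uxx_def)
  qed
  have uyx_d: "((\<lambda>x. uy (x,y)) has_real_derivative uxy (x,y)) (at x)" for x y
  proof -
    have "((\<lambda>x. (- (2/3) * KK * y^2) * P x (sg y) + cc * (Q x (sg y) - (2/5 * y^3) * R x (sg y))) has_real_derivative
        (- (2/3) * KK * y^2) * Px x (sg y) + cc * (Qx x (sg y) - (2/5 * y^3) * Rx x (sg y))) (at x)"
      by (rule DERIV_add[OF DERIV_cmult[OF xP] DERIV_cmult[OF DERIV_diff[OF xQ DERIV_cmult[OF xR]]]])
    then show ?thesis by (simp add: uy_def uxy_def)
  qed
  have uy_d: "((\<lambda>y. u (x,y)) has_real_derivative uy (x,y)) (at y within {..0})" if y: "y \<le> 0" for x y
  proof -
    have "((\<lambda>y. F0 x + KK * L P x (sg y) + (cc * y) * Q x (sg y)) has_real_derivative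
        0 + KK * ((sg y * P x (sg y)) * - sqrt (-y)) + ((cc * 1) * Q x (sg y) + (Qt x (sg y) * - sqrt (-y)) * (cc * y))) (at y within {..0})"
      by (rule DERIV_add[OF DERIV_add[OF DERIV_const DERIV_cmult[OF DERIV_chain2[OF tLP sg_deriv[OF y]]]]
            DERIV_mult[OF DERIV_cmult[OF DERIV_ident] DERIV_chain2[OF tQ sg_deriv[OF y]]]])
    moreover have "0 + KK * ((sg y * P x (sg y)) * - sqrt (-y)) + ((cc * 1) * Q x (sg y) + (Qt x (sg y) * - sqrt (-y)) * (cc * y))
        = uy (x,y)"
    proof -
      have "0 + KK * ((sg y * P x (sg y)) * - sqrt (-y)) + ((cc * 1) * Q x (sg y) + (Qt x (sg y) * - sqrt (-y)) * (cc * y))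
          = - KK * P x (sg y) * (sg y * sqrt (-y)) + cc * Q x (sg y) - 3/5 * cc * y * R x (sg y) * (sg y * sqrt (-y))"
        unfolding QtR by (simp add: algebra_simps)
      also have "\<dots> = uy (x,y)" unfolding sg_sqrt[OF y] uy_def
        by (simp add: algebra_simps power2_eq_square power3_eq_cube)
      finally show ?thesis .
    qed
    ultimately show ?thesis by (simp add: u_def)
  qed
  have uxy_d: "((\<lambda>y. ux (x,y)) has_real_derivative uxy (x,y)) (at y within {..0})" if y: "y \<le> 0" for x y
  proof -
    have "((\<lambda>y. F1 x + KK * L Px x (sg y) + (cc * y) * Qx x (sg y)) has_real_derivative
        0 + KK * ((sg y * Px x (sg y)) * - sqrt (-y)) + ((cc * 1) * Qx x (sg y) + (Qxt x (sg y) * - sqrt (-y)) * (cc * y))) (at y within {..0})"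
      by (rule DERIV_add[OF DERIV_add[OF DERIV_const DERIV_cmult[OF DERIV_chain2[OF tLPx sg_deriv[OF y]]]]
            DERIV_mult[OF DERIV_cmult[OF DERIV_ident] DERIV_chain2[OF tQx sg_deriv[OF y]]]])
    moreover have "0 + KK * ((sg y * Px x (sg y)) * - sqrt (-y)) + ((cc * 1) * Qx x (sg y) + (Qxt x (sg y) * - sqrt (-y)) * (cc * y))
        = uxy (x,y)"
    proof -
      have "0 + KK * ((sg y * Px x (sg y)) * - sqrt (-y)) + ((cc * 1) * Qx x (sg y) + (Qxt x (sg y) * - sqrt (-y)) * (cc * y))
          = - KK * Px x (sg y) * (sg y * sqrt (-y)) + cc * Qx x (sg y) - 3/5 * cc * y * Rx x (sg y) * (sg y * sqrt (-y))"
        unfolding QxtRx by (simp add: algebra_simps)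
      also have "\<dots> = uxy (x,y)" unfolding sg_sqrt[OF y] uxy_def
        by (simp add: algebra_simps power2_eq_square power3_eq_cube)
      finally show ?thesis .
    qed
    ultimately show ?thesis by (simp add: ux_def)
  qed
  have uyy_d: "((\<lambda>y. uy (x,y)) has_real_derivative uyy (x,y)) (at y within {..0})" if y: "y \<le> 0" for x y
  proof -
    have p2: "((\<lambda>y. y^2) has_real_derivative 2 * y) (at y within {..0})"
      by (auto intro!: derivative_eq_intros)
    have p3: "((\<lambda>y. y^3) has_real_derivative 3 * y^2) (at y within {..0})"
      by (auto intro!: derivative_eq_intros)
    have "((\<lambda>y. (- (2/3) * KK * y^2) * P x (sg y) + cc * (Q x (sg y) - (2/5 * y^3) * R x (sg y))) has_real_derivative
        ((- (2/3) * KK * (2 * y)) * P x (sg y) + (Pt x (sg y) * - sqrt (-y)) * (- (2/3) * KK * y^2))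
        + cc * (Qt x (sg y) * - sqrt (-y) - ((2/5 * (3 * y^2)) * R x (sg y) + (Rt x (sg y) * - sqrt (-y)) * (2/5 * y^3)))) (at y within {..0})"
      by (rule DERIV_add[OF DERIV_mult[OF DERIV_cmult[OF p2] DERIV_chain2[OF tP sg_deriv[OF y]]]
            DERIV_cmult[OF DERIV_diff[OF DERIV_chain2[OF tQ sg_deriv[OF y]] DERIV_mult[OF DERIV_cmult[OF p3] DERIV_chain2[OF tR sg_deriv[OF y]]]]]])
    then show ?thesis unfolding uy_def uyy_def by (simp add: algebra_simps)
  qed
  have Du: "(u has_derivative (\<lambda>(h,k). ux p * h + uy p * k)) (at p within UNIV \<times> {..0})" if "p \<in> UNIV \<times> {..0}" for p
    by (rule partials2[OF ux_d uy_d continuous_on_subset[OF cuy subset_UNIV] that])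
  have Dux: "(ux has_derivative (\<lambda>(h,k). uxx p * h + uxy p * k)) (at p within UNIV \<times> {..0})" if "p \<in> UNIV \<times> {..0}" for p
    by (rule partials2[OF uxx_d uxy_d continuous_on_subset[OF cuxy subset_UNIV] that])
  have Duy: "(uy has_derivative (\<lambda>(h,k). uxy p * h + uyy p * k)) (at p within UNIV \<times> {..0})" if "p \<in> UNIV \<times> {..0}" for p
    by (rule partials2[OF uyx_d uyy_d continuous_on_subset[OF cuyy subset_UNIV] that])
  have pde: "snd p * uxx p + uyy p = 0" if "p \<in> D" for p
  proof -
    obtain x y where p: "p = (x,y)" by (cases p)
    have y: "y \<le> 0" using that DD p by auto
    define s where "s = sg y"
    define r where "r = sqrt (-y)"
    have sr: "s * r = 2/3 * y^2" unfolding s_def r_def by (rule sg_sqrt[OF y])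
    have yr: "y^2 * r = - (3/2) * y * s" unfolding s_def r_def by (rule y2_sqrt)
    have Z0: "F2 x + KK * L Pxx x s - 4/3 * KK * P x s - KK * s * Pt x s = 0" by (rule ZI)
    have "snd p * uxx p + uyy p =
        y * (F2 x + KK * L Pxx x s - 4/3 * KK * P x s - KK * s * Pt x s) + 2/3 * KK * Pt x s * (y^2 * r + 3/2 * y * s)
        + cc * y^2 * Qxx x s - cc * (Qt x s * r) - 6/5 * cc * y^2 * R x s + 2/5 * cc * y * Rt x s * (y^2 * r)"
      unfolding p uxx_def uyy_def s_def r_def
      by (simp add: algebra_simps power2_eq_square power3_eq_cube)
    also have "\<dots> = cc * y^2 * Qxx x s - cc * (3/5 * R x s * (s * r)) - 6/5 * cc * y^2 * R x s - 3/5 * cc * y^2 * (s * Rt x s)"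
      unfolding Z0 yr QtR by (simp add: algebra_simps power2_eq_square)
    also have "\<dots> = 0"
      unfolding sr RtI by (simp add: algebra_simps power2_eq_square)
    finally show ?thesis .
  qed
  have bdry: "u (x, 0) = u0 x \<and> uy (x, 0) = u1 x" if "x \<in> {x1..x2}" for x
  proof -
    have "Q x 0 = G0 x * B2" unfolding Q_def J_zero B2_def ..
    then show ?thesis using bd that B2pos unfolding u_def uy_def cc_def by (simp add: L_zero)
  qed
  show ?thesis
    unfolding tricomi_classical_solution_def
  proof (intro exI conjI ballI)
    show "continuous_on D u" using cu continuous_on_subset by blast
    show "continuous_on D ux" using cux continuous_on_subset by blast
    show "continuous_on D uy" using cuy continuous_on_subset by blast
    show "continuous_on D uxx" using cuxx continuous_on_subset by blast
    show "continuous_on D uxy" using cuxy continuous_on_subset by blast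
    show "continuous_on D uxy" using cuxy continuous_on_subset by blast
    show "continuous_on D uyy" using cuyy continuous_on_subset by blast
    fix p assume p: "p \<in> D"
    then have p': "p \<in> UNIV \<times> {..0}" using DD by auto
    show "(u has_derivative (\<lambda>(h, k). ux p * h + uy p * k)) (at p within D)"
      by (rule has_derivative_subset[OF Du[OF p'] DD])
    show "(ux has_derivative (\<lambda>(h, k). uxx p * h + uxy p * k)) (at p within D)"
      by (rule has_derivative_subset[OF Dux[OF p'] DD])
    show "(uy has_derivative (\<lambda>(h, k). uxy p * h + uyy p * k)) (at p within D)"
      by (rule has_derivative_subset[OF Duy[OF p'] DD])
    show "snd p * uxx p + uyy p = 0" by (rule pde[OF p])
  next
    fix x assume "x \<in> {x1..x2}"
    then show "u (x, 0) = u0 x" "uy (x, 0) = u1 x" using bdry by auto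
  qed
qed


lemma unpack_C4:
  assumes "Ck_on 4 F UNIV"
  shows "\<exists>F1 F2 F3 F4. (\<forall>z. (F has_real_derivative F1 z) (at z)) \<and> (\<forall>z. (F1 has_real_derivative F2 z) (at z))
     \<and> (\<forall>z. (F2 has_real_derivative F3 z) (at z)) \<and> (\<forall>z. (F3 has_real_derivative F4 z) (at z)) \<and> continuous_on UNIV F4"
  using assms by (simp add: numeral_eq_Suc)

lemma unpack_C3:
  assumes "Ck_on 3 F UNIV"
  shows "\<exists>F1 F2 F3. (\<forall>z. (F has_real_derivative F1 z) (at z)) \<and> (\<forall>z. (F1 has_real_derivative F2 z) (at z))
     \<and> (\<forall>z. (F2 has_real_derivative F3 z) (at z)) \<and> continuous_on UNIV F3"
  using assms by (simp add: numeral_eq_Suc)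

theorem theoremA1:
  fixes x1 x2 :: real and u0 u1 :: "real \<Rightarrow> real"
  assumes "x1 < x2"
    and "Ck_on 4 u0 {x1..x2}"
    and "Ck_on 3 u1 {x1..x2}"
  shows "\<exists>\<delta>::real. 0 < \<delta> \<and> \<delta> \<le> root 3 (9 * (x2 - x1)^2 / 16) \<and>
           (\<exists>u. tricomi_classical_solution x1 x2 u0 u1 (tricomi_region x1 x2 \<delta>) u)"
proof -
  obtain F where F: "Ck_on 4 F UNIV" "\<forall>x\<in>{x1..x2}. F x = u0 x"
    using Ck_extend[OF assms(1) assms(2)] by blast
  obtain G where G: "Ck_on 3 G UNIV" "\<forall>x\<in>{x1..x2}. G x = u1 x"
    using Ck_extend[OF assms(1) assms(3)] by blast
  obtain F1 F2 F3 F4 where dF: "\<And>z. (F has_real_derivative F1 z) (at z)" "\<And>z. (F1 has_real_derivative F2 z) (at z)"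
    "\<And>z. (F2 has_real_derivative F3 z) (at z)" "\<And>z. (F3 has_real_derivative F4 z) (at z)" "continuous_on UNIV F4"
    using unpack_C4[OF F(1)] by blast
  obtain G1 G2 G3 where dG: "\<And>z. (G has_real_derivative G1 z) (at z)" "\<And>z. (G1 has_real_derivative G2 z) (at z)"
    "\<And>z. (G2 has_real_derivative G3 z) (at z)" "continuous_on UNIV G3"
    using unpack_C3[OF G(1)] by blast
  define \<delta> where "\<delta> = root 3 (9 * (x2 - x1)^2 / 16)"
  have dpos: "0 < \<delta>" unfolding \<delta>_def using assms(1) by simp
  have DD: "tricomi_region x1 x2 \<delta> \<subseteq> UNIV \<times> {..0}" unfolding tricomi_region_def by auto
  have "\<exists>u. tricomi_classical_solution x1 x2 u0 u1 (tricomi_region x1 x2 \<delta>) u"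
    by (rule main[OF dF dG DD]) (use F(2) G(2) in auto)
  moreover have "\<delta> \<le> root 3 (9 * (x2 - x1)^2 / 16)" by (simp add: \<delta>_def)
  ultimately show ?thesis using dpos by blast
qed

end
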